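(* Let $c>0$. Then, as $r\to\infty$, $$\log\Big(\sum_{k=0}^\infty\frac{c^k}{k!}e^{-c}e^{-r/(k+1)}\Big)\sim-\sqrt{2r\log r},$$ i.e. the ratio of the two sides tends to $1$. *)

theory Defs
  imports "HOL-Analysis.Analysis" "HOL-Library.Landau_Symbols"
begin

end

theory Submission
  imports Defs "HOL-Real_Asymp.Real_Asymp"
begin

lemma exp_sums_real: "(\<lambda>k. (x::real) ^ k / fact k) sums exp x"
  using exp_converges[of x] by (simp add: divide_inverse mult.commute)

lemma summable_exp_real: "summable (\<lambda>k. (x::real) ^ k / fact k)"
  using exp_sums_real sums_summable by blast

lemma ln_fact_lower: "real n * ln (real n) - real n \<le> ln (fact n :: real)"
proof (cases "n = 0")
  case True then show ?thesis by simp
next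
  case False
  have "(\<Sum>k\<in>{n}. real n ^ k / fact k) \<le> (\<Sum>k. real n ^ k / fact k)"
    by (rule sum_le_suminf[OF summable_exp_real]) auto
  then have le: "real n ^ n / fact n \<le> exp (real n)"
    using sums_unique[OF exp_sums_real[of "real n"]] by simp
  have pos: "0 < real n ^ n / fact n" using False by simp
  have "ln (real n ^ n / fact n) \<le> real n"
    using ln_le_cancel_iff[OF pos exp_gt_zero] le by simp
  moreover have "ln (real n ^ n / fact n) = real n * ln (real n) - ln (fact n)"
    using False by (simp add: ln_div ln_realpow)
  ultimately show ?thesis by simp
qed

lemma ln_fact_upper: "ln (fact n :: real) \<le> real n * ln (real n)"
proof (cases "n = 0")
  case True then show ?thesis by simp
next
  case False
  have "(fact n :: real) \<le> of_nat (n ^ n)" by (rule fact_le_power)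
  then have "ln (fact n :: real) \<le> ln (real n ^ n)"
    by (subst ln_le_cancel_iff) auto
  then show ?thesis using False by (simp add: ln_realpow)
qed

lemma ln_term:
  assumes "c > 0"
  shows "ln (c ^ k / fact k * exp (- c) * exp (- r / real (k + 1))) =
         real k * ln c - ln (fact k) - c - r / real (k + 1)"
  using assms by (simp add: ln_mult ln_div ln_realpow)

lemma term_pos:
  assumes "c > 0"
  shows "0 < (c::real) ^ k / fact k * exp (- c) * exp (- r / real (k + 1))"
  using assms by simp

lemma summable_terms:
  assumes "c > 0" "r \<ge> 0"
  shows "summable (\<lambda>k. (c::real) ^ k / fact k * exp (- c) * exp (- r / real (k + 1)))"
proof (rule summable_comparison_test[of _ "\<lambda>k. exp (- c) * (c ^ k / fact k)"])
  show "\<exists>N. \<forall>n\<ge>N. norm (c ^ n / fact n * exp (- c) * exp (- r / real (n + 1)))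
          \<le> exp (- c) * (c ^ n / fact n)"
    using assms by (intro exI[of _ 0] allI impI) (simp add: mult_le_cancel_left1 field_simps)
  show "summable (\<lambda>k. exp (- c) * (c ^ k / fact k))"
    by (intro summable_mult summable_exp_real)
qed

lemma amgm:
  fixes u r y :: real
  assumes "u \<ge> 1" "y \<ge> 1" "r \<ge> 0" "2 * sqrt (r * ln y) \<le> r / y"
  shows "2 * sqrt (r * ln y) \<le> u * ln u + r / u"
proof (cases "u \<ge> y")
  case True
  have ly: "ln y \<ge> 0" using assms by simp
  have "u * ln y \<le> u * ln u" using True assms by (intro mult_left_mono) auto
  moreover have "2 * sqrt (r * ln y) \<le> u * ln y + r / u"
  proof -
    have h1: "0 \<le> (sqrt (u * ln y) - sqrt (r / u))^2" by simp
    have h2: "(sqrt (u * ln y) - sqrt (r / u))^2 = u * ln y + r / u - 2 * sqrt (u * ln y) * sqrt (r / u)"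
      using assms ly by (simp add: power2_eq_square algebra_simps)
    have h3: "sqrt (u * ln y) * sqrt (r / u) = sqrt (r * ln y)"
      using assms by (simp add: real_sqrt_mult[symmetric])
    show ?thesis using h1 h2 h3 by linarith
  qed
  ultimately show ?thesis by simp
next
  case False
  have "r / y \<le> r / u" using False assms by (intro divide_left_mono) auto
  moreover have "0 \<le> u * ln u" using assms by simp
  ultimately show ?thesis using assms by linarith
qed

lemma lower_bound:
  fixes c x r :: real
  assumes c: "c > 0" and x: "x \<ge> 1" and r: "r \<ge> 0"
  shows "- c - \<bar>ln c\<bar> * x - x * ln x - r / x
           \<le> ln (\<Sum>k. c ^ k / fact k * exp (- c) * exp (- r / real (k + 1)))"
proof -
  define K where "K = nat \<lfloor>x\<rfloor>"
  have Kx: "real K \<le> x" using x unfolding K_def by simp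
  have xK: "x < real K + 1" using x unfolding K_def by linarith
  have K1: "1 \<le> real K" using x unfolding K_def by simp
  let ?a = "\<lambda>k. c ^ k / fact k * exp (- c) * exp (- r / real (k + 1))"
  have "(\<Sum>k\<in>{K}. ?a k) \<le> (\<Sum>k. ?a k)"
    by (rule sum_le_suminf[OF summable_terms[OF c r]]) (use c in auto)
  then have aS: "?a K \<le> (\<Sum>k. ?a k)" by simp
  have "ln (?a K) \<le> ln (\<Sum>k. ?a k)"
    using aS term_pos[OF c, of K r] by (subst ln_le_cancel_iff) auto
  moreover have "ln (?a K) = real K * ln c - ln (fact K) - c - r / real (K + 1)"
    by (rule ln_term[OF c])
  moreover have "- \<bar>ln c\<bar> * x \<le> real K * ln c"
  proof -
    have "\<bar>real K * ln c\<bar> \<le> x * \<bar>ln c\<bar>"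
      using Kx K1 by (simp add: abs_mult mult_right_mono)
    then show ?thesis by (simp add: abs_le_iff algebra_simps)
  qed
  moreover have "ln (fact K) \<le> x * ln x"
  proof -
    have "real K * ln (real K) \<le> x * ln x"
      using Kx K1 by (intro mult_mono) auto
    then show ?thesis using ln_fact_upper[of K] by linarith
  qed
  moreover have "r / real (K + 1) \<le> r / x"
    using xK x r by (intro divide_left_mono) auto
  ultimately show ?thesis by linarith
qed

lemma upper_bound:
  fixes c x y r :: real
  assumes c: "c > 0" and x: "x \<ge> 1" and y: "y \<ge> 1" and r: "r \<ge> 0"
    and G: "2 * sqrt (r * ln y) \<le> r / y"
  shows "(\<Sum>k. c ^ k / fact k * exp (- c) * exp (- r / real (k + 1)))
    \<le> exp (- (2 * sqrt (r * ln y) - ln (4 * x + 1) - (4 * x + 1) * (2 + \<bar>ln c\<bar>)))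
      + exp (- (4 * x * ln (4 * x) - (4 * x + 1) * (1 + \<bar>ln c\<bar>)))"
proof -
  define D where "D = \<bar>ln c\<bar>"
  define M where "M = nat \<lceil>4 * x\<rceil>"
  define Gv where "Gv = 2 * sqrt (r * ln y)"
  have Mx: "4 * x \<le> real M" using x unfolding M_def by linarith
  have xM: "real M < 4 * x + 1" using x unfolding M_def by linarith
  have M1: "1 \<le> real M" using Mx x by linarith
  let ?a = "\<lambda>k. c ^ k / fact k * exp (- c) * exp (- r / real (k + 1))"
  have summ: "summable ?a" by (rule summable_terms[OF c r])
  have split: "(\<Sum>k. ?a k) = (\<Sum>j. ?a (j + M)) + (\<Sum>k<M. ?a k)"
    by (rule suminf_split_initial_segment[OF summ])
  have fin_each: "?a k \<le> exp ((4 * x + 1) * (2 + D) - Gv)" if "k < M" for k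
  proof -
    define u where "u = real k + 1"
    have u1: "1 \<le> u" unfolding u_def by simp
    have uM: "u \<le> real M" using that unfolding u_def by linarith
    have "ln (fact (Suc k) :: real) = ln u + ln (fact k)"
      unfolding u_def by (simp add: ln_mult add.commute)
    with ln_fact_lower[of "Suc k"] have lf: "u * ln u - u - ln u \<le> ln (fact k)"
      unfolding u_def by (simp add: add.commute)
    have lnu: "ln u \<le> u" using u1 ln_less_self[of u] by linarith
    have kc: "real k * ln c \<le> u * D"
    proof -
      have "real k * ln c \<le> real k * D" unfolding D_def by (intro mult_left_mono) auto
      also have "\<dots> \<le> u * D" unfolding D_def u_def by (intro mult_right_mono) auto
      finally show ?thesis .
    qed
    have am: "Gv \<le> u * ln u + r / u" unfolding Gv_def using amgm[OF u1 y r G] .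
    have uD: "u * (2 + D) \<le> (4 * x + 1) * (2 + D)"
      using uM xM unfolding D_def by (intro mult_right_mono) auto
    have "ln (?a k) = real k * ln c - ln (fact k) - c - r / u"
      unfolding u_def using ln_term[OF c, of k r] by (simp add: add.commute)
    also have "\<dots> \<le> (4 * x + 1) * (2 + D) - Gv"
      using lf lnu kc am uD c by (simp add: algebra_simps)
    finally have "ln (?a k) \<le> (4 * x + 1) * (2 + D) - Gv" .
    then show ?thesis using term_pos[OF c, of k r]
      by (metis exp_le_cancel_iff exp_ln)
  qed
  have fin: "(\<Sum>k<M. ?a k) \<le> exp (- (Gv - ln (4 * x + 1) - (4 * x + 1) * (2 + D)))"
  proof -
    have "(\<Sum>k<M. ?a k) \<le> (\<Sum>k<M. exp ((4 * x + 1) * (2 + D) - Gv))"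
      by (intro sum_mono fin_each) auto
    also have "\<dots> = real M * exp ((4 * x + 1) * (2 + D) - Gv)" by simp
    also have "\<dots> \<le> (4 * x + 1) * exp ((4 * x + 1) * (2 + D) - Gv)"
      using xM by (intro mult_right_mono) auto
    also have "\<dots> = exp (- (Gv - ln (4 * x + 1) - (4 * x + 1) * (2 + D)))"
      using x by (simp add: exp_add exp_diff)
    finally show ?thesis .
  qed
  have tail_each: "?a (j + M) \<le> exp (- c) * (c ^ M / fact M) * (c ^ j / fact j)" for j
  proof -
    have "fact j * fact M dvd (fact (j + M) :: nat)" by (rule fact_fact_dvd_fact)
    then have "fact j * fact M \<le> (fact (j + M) :: nat)" by (intro dvd_imp_le) auto
    then have fle: "(fact j * fact M :: real) \<le> fact (j + M)"
      by (metis of_nat_fact of_nat_le_iff of_nat_mult)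
    have e1: "exp (- r / real (j + M + 1)) \<le> 1" using r by simp
    have "?a (j + M) \<le> c ^ (j + M) / fact (j + M) * exp (- c)"
      using mult_left_mono[OF e1, of "c ^ (j + M) / fact (j + M) * exp (- c)"] c by simp
    also have "\<dots> \<le> c ^ (j + M) / (fact j * fact M) * exp (- c)"
      using c fle by (intro mult_right_mono divide_left_mono) auto
    also have "\<dots> = exp (- c) * (c ^ M / fact M) * (c ^ j / fact j)"
      by (simp add: power_add field_simps)
    finally show ?thesis .
  qed
  have tail1: "(\<Sum>j. ?a (j + M)) \<le> c ^ M / fact M"
  proof -
    have "(\<Sum>j. ?a (j + M)) \<le> (\<Sum>j. exp (- c) * (c ^ M / fact M) * (c ^ j / fact j))"
      by (intro suminf_le tail_each summable_ignore_initial_segment summ summable_mult summable_exp_real)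
    also have "\<dots> = exp (- c) * (c ^ M / fact M) * exp c"
      by (subst suminf_mult[OF summable_exp_real]) (simp add: sums_unique[OF exp_sums_real, symmetric])
    also have "\<dots> = c ^ M / fact M" by (simp add: exp_minus field_simps)
    finally show ?thesis .
  qed
  have tail2: "c ^ M / fact M \<le> exp (- (4 * x * ln (4 * x) - (4 * x + 1) * (1 + D)))"
  proof -
    have "ln (c ^ M / fact M) = real M * ln c - ln (fact M)"
      using c by (simp add: ln_div ln_realpow)
    also have "\<dots> \<le> real M * D - (real M * ln (real M) - real M)"
    proof -
      have "real M * ln c \<le> real M * D" unfolding D_def by (intro mult_left_mono) auto
      then show ?thesis using ln_fact_lower[of M] by linarith
    qed
    also have "\<dots> \<le> - (4 * x * ln (4 * x) - (4 * x + 1) * (1 + D))"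
    proof -
      have "4 * x * ln (4 * x) \<le> real M * ln (real M)"
        using Mx x by (intro mult_mono) auto
      moreover have "real M * (1 + D) \<le> (4 * x + 1) * (1 + D)"
        using xM unfolding D_def by (intro mult_right_mono) auto
      ultimately show ?thesis by (simp add: algebra_simps)
    qed
    finally show ?thesis using c
      by (metis exp_le_cancel_iff exp_ln divide_pos_pos zero_less_power fact_gt_zero)
  qed
  show ?thesis
    using split fin tail1 tail2 unfolding D_def Gv_def by linarith
qed

theorem lemma1:
  fixes c :: real
  assumes "c > 0"
  shows "(\<lambda>r::real. ln (\<Sum>k. c ^ k / fact k * exp (- c) * exp (- r / real (k + 1))))
           \<sim>[at_top] (\<lambda>r. - sqrt (2 * r * ln r))"
proof -
  note c = assms
  define D where "D = \<bar>ln c\<bar>"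
  define S where "S = (\<lambda>r::real. (\<Sum>k. c ^ k / fact k * exp (- c) * exp (- r / real (k + 1))))"
  define f1 where "f1 = (\<lambda>r::real. -c - D * sqrt(2*r/ln r) - sqrt(2*r/ln r) * ln (sqrt(2*r/ln r)) - r / sqrt(2*r/ln r))"
  define f2 where "f2 = (\<lambda>r::real. ln 2 - (2 * sqrt (r * ln (sqrt r / ln r)) - ln (4* sqrt(2*r/ln r)+1) - (4* sqrt(2*r/ln r)+1)*(2+D)))"
  have l1: "((\<lambda>r. f1 r / (- sqrt (2*r*ln r))) \<longlongrightarrow> 1) at_top"
    unfolding f1_def by (real_asymp simp add: powr_half_sqrt real_sqrt_divide field_simps)
  have l2: "((\<lambda>r. f2 r / (- sqrt (2*r*ln r))) \<longlongrightarrow> 1) at_top"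
    unfolding f2_def by (real_asymp simp add: powr_half_sqrt real_sqrt_divide field_simps)
  have e1: "eventually (\<lambda>r::real. 2 * sqrt (r * ln (sqrt r / ln r)) \<le> r / (sqrt r / ln r)) at_top"
    by real_asymp
  have e2: "eventually (\<lambda>r::real. 1 \<le> sqrt r / ln r) at_top" by real_asymp
  have e3: "eventually (\<lambda>r::real. 1 \<le> sqrt(2*r/ln r)) at_top" by real_asymp
  have e4: "eventually (\<lambda>r::real. 2 * sqrt (r * ln (sqrt r / ln r)) - ln (4* sqrt(2*r/ln r)+1) - (4* sqrt(2*r/ln r)+1)
              \<le> 4* sqrt(2*r/ln r) * ln (4* sqrt(2*r/ln r))) at_top"
    by (real_asymp simp add: powr_half_sqrt real_sqrt_divide field_simps)
  have e5: "eventually (\<lambda>r::real. 1 < r) at_top" by real_asymp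
  have bounds: "eventually (\<lambda>r. f1 r \<le> ln (S r) \<and> ln (S r) \<le> f2 r \<and> 0 < sqrt (2*r*ln r)) at_top"
    using e1 e2 e3 e4 e5
  proof eventually_elim
    case (elim r)
    define x where "x = sqrt(2*r/ln r)"
    define y where "y = sqrt r / ln r"
    have r0: "r \<ge> 0" using elim by simp
    have lr: "ln r > 0" using elim by simp
    have Spos: "0 < S r" unfolding S_def
      by (intro suminf_pos summable_terms[OF c r0] term_pos[OF c])
    have lo: "f1 r \<le> ln (S r)"
      using lower_bound[OF c _ r0, of x] elim unfolding f1_def S_def x_def D_def by simp
    have up: "S r \<le> exp (- (2 * sqrt (r * ln y) - ln (4 * x + 1) - (4 * x + 1) * (2 + D)))
      + exp (- (4 * x * ln (4 * x) - (4 * x + 1) * (1 + D)))"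
      using upper_bound[OF c _ _ r0, of x y] elim unfolding S_def x_def y_def D_def by simp
    define A where "A = 2 * sqrt (r * ln y) - ln (4 * x + 1) - (4 * x + 1) * (2 + D)"
    have BA: "A \<le> 4 * x * ln (4 * x) - (4 * x + 1) * (1 + D)"
      using elim(4) unfolding A_def x_def y_def by (simp add: algebra_simps)
    have eBA: "exp (- (4 * x * ln (4 * x) - (4 * x + 1) * (1 + D))) \<le> exp (- A)" using BA by simp
    have "S r \<le> 2 * exp (- A)" using up eBA unfolding A_def by linarith
    then have "ln (S r) \<le> ln (2 * exp (- A))" using Spos by (subst ln_le_cancel_iff) auto
    also have "\<dots> = ln 2 - A" by (simp add: ln_mult)
    finally have "ln (S r) \<le> f2 r" unfolding f2_def A_def x_def y_def by simp
    moreover have "0 < sqrt (2*r*ln r)" using elim lr by simp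
    ultimately show ?case using lo by simp
  qed
  have "((\<lambda>r. ln (S r) / (- sqrt (2*r*ln r))) \<longlongrightarrow> 1) at_top"
  proof (rule tendsto_sandwich[OF _ _ l2 l1])
    show "eventually (\<lambda>r. f2 r / (- sqrt (2*r*ln r)) \<le> ln (S r) / (- sqrt (2*r*ln r))) at_top"
      using bounds by eventually_elim (intro divide_right_mono_neg, auto)
    show "eventually (\<lambda>r. ln (S r) / (- sqrt (2*r*ln r)) \<le> f1 r / (- sqrt (2*r*ln r))) at_top"
      using bounds by eventually_elim (intro divide_right_mono_neg, auto)
  qed
  then show ?thesis unfolding S_def by (rule asymp_equivI')
qed

end
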